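(* Let $\mathbf{C}$ be a category, take $\mathcal{M}=\mathrm{mono}(\mathbf{C})$ the class of all monomorphisms as stable system of monics, suppose $\mathbf{C}$ has pullbacks along monomorphisms and has a $\mathrm{mono}(\mathbf{C})$-partial map classifier. Then for every composable sequence of monomorphisms $A\xrightarrow{f}B\xrightarrow{m}C$, any final pullback complement $A\xrightarrow{n}F\xrightarrow{g}C$ of $(f,m)$ satisfies that both $n$ and $g$ are monomorphisms.
   Context: Final pullback complement (FPC) of composable $A\xrightarrow{f}B\xrightarrow{m}C$: a pair $A\xrightarrow{n}F\xrightarrow{g}C$ with $g\circ n=m\circ f$ forming a pullback square, such that for every pullback square $m\circ u=w\circ v$ ($u:X\to B$, $v:X\to Y$, $w:Y\to C$) and every $t:X\to A$ with $f\circ t=u$ there is a unique $y:Y\to F$ with $g\circ y=w$ and $y\circ v=n\circ t$. "Has pullbacks along monomorphisms": pullbacks of cospans $A\to B\leftarrow B'$ with $B'\to B$ monic exist. For a stable system of monics $\mathcal{M}$ (a class of monos containing isomorphisms, closed under composition and pullback), an $\mathcal{M}$-partial map classifier is a functor $T:\mathbf{C}\to\mathbf{C}$ with a natural transformation $\eta:\mathrm{Id}_{\mathbf{C}}\Rightarrow T$ such that each $\eta_X\in\mathcal{M}$ and for every span $A\xleftarrow{m}X\xrightarrow{f}B$ with $m\in\mathcal{M}$ there is a unique $\varphi:A\to T(B)$ such that $(m,f)$ is a pullback of $(\varphi,\eta_B)$. *)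

theory Defs
  imports Main
begin

text \<open>A (locally small, set-based) category: objects of type 'o, arrows of type 'a.
  cmp C g f denotes the composite g \<circ> f (f first).\<close>

record ('o, 'a) category_data =
  Ob  :: "'o set"
  Ar  :: "'a set"
  dom :: "'a \<Rightarrow> 'o"
  cod :: "'a \<Rightarrow> 'o"
  idt :: "'o \<Rightarrow> 'a"
  cmp :: "'a \<Rightarrow> 'a \<Rightarrow> 'a"

definition hom :: "('o, 'a) category_data \<Rightarrow> 'o \<Rightarrow> 'o \<Rightarrow> 'a set" where
  "hom C X Y = {f \<in> Ar C. dom C f = X \<and> cod C f = Y}"

definition is_category :: "('o, 'a) category_data \<Rightarrow> bool" where
  "is_category C \<longleftrightarrow>
     (\<forall>f\<in>Ar C. dom C f \<in> Ob C \<and> cod C f \<in> Ob C) \<and>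
     (\<forall>X\<in>Ob C. idt C X \<in> hom C X X) \<and>
     (\<forall>f\<in>Ar C. \<forall>g\<in>Ar C. cod C f = dom C g \<longrightarrow>
         cmp C g f \<in> hom C (dom C f) (cod C g)) \<and>
     (\<forall>f\<in>Ar C. cmp C f (idt C (dom C f)) = f \<and> cmp C (idt C (cod C f)) f = f) \<and>
     (\<forall>f\<in>Ar C. \<forall>g\<in>Ar C. \<forall>h\<in>Ar C. cod C f = dom C g \<longrightarrow> cod C g = dom C h \<longrightarrow>
         cmp C h (cmp C g f) = cmp C (cmp C h g) f)"

definition is_mono :: "('o, 'a) category_data \<Rightarrow> 'a \<Rightarrow> bool" where
  "is_mono C m \<longleftrightarrow> m \<in> Ar C \<and>
     (\<forall>f\<in>Ar C. \<forall>g\<in>Ar C. dom C f = dom C g \<longrightarrow> cod C f = dom C m \<longrightarrow> cod C g = dom C m \<longrightarrow>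
         cmp C m f = cmp C m g \<longrightarrow> f = g)"

text \<open>is_pullback C f g p q: the square  f \<circ> p = g \<circ> q  (f : A \<rightarrow> Z, g : B \<rightarrow> Z,
  p : P \<rightarrow> A, q : P \<rightarrow> B) is a pullback of the cospan (f, g).\<close>
definition is_pullback :: "('o, 'a) category_data \<Rightarrow> 'a \<Rightarrow> 'a \<Rightarrow> 'a \<Rightarrow> 'a \<Rightarrow> bool" where
  "is_pullback C f g p q \<longleftrightarrow>
     f \<in> Ar C \<and> g \<in> Ar C \<and> p \<in> Ar C \<and> q \<in> Ar C \<and>
     cod C f = cod C g \<and> cod C p = dom C f \<and> cod C q = dom C g \<and> dom C p = dom C q \<and>
     cmp C f p = cmp C g q \<and>
     (\<forall>Z\<in>Ob C. \<forall>h\<in>hom C Z (dom C f). \<forall>k\<in>hom C Z (dom C g).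
        cmp C f h = cmp C g k \<longrightarrow>
        (\<exists>!u. u \<in> hom C Z (dom C p) \<and> cmp C p u = h \<and> cmp C q u = k))"

definition has_pullbacks_along_monos :: "('o, 'a) category_data \<Rightarrow> bool" where
  "has_pullbacks_along_monos C \<longleftrightarrow>
     (\<forall>f\<in>Ar C. \<forall>m\<in>Ar C. is_mono C m \<longrightarrow> cod C f = cod C m \<longrightarrow>
        (\<exists>p q. is_pullback C f m p q))"

definition is_fpc :: "('o, 'a) category_data \<Rightarrow> 'a \<Rightarrow> 'a \<Rightarrow> 'a \<Rightarrow> 'a \<Rightarrow> bool" where
  "is_fpc C f m n g \<longleftrightarrow>
     n \<in> Ar C \<and> g \<in> Ar C \<and> dom C n = dom C f \<and> cod C n = dom C g \<and> cod C g = cod C m \<and>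
     is_pullback C m g f n \<and>
     (\<forall>u\<in>Ar C. \<forall>v\<in>Ar C. \<forall>w\<in>Ar C. \<forall>t\<in>Ar C.
        is_pullback C m w u v \<longrightarrow> dom C t = dom C u \<longrightarrow> cod C t = dom C f \<longrightarrow> cmp C f t = u \<longrightarrow>
        (\<exists>!y. y \<in> hom C (dom C w) (cod C n) \<and> cmp C g y = w \<and> cmp C y v = cmp C n t))"

definition is_endofunctor ::
  "('o, 'a) category_data \<Rightarrow> ('o \<Rightarrow> 'o) \<Rightarrow> ('a \<Rightarrow> 'a) \<Rightarrow> bool" where
  "is_endofunctor C TO TA \<longleftrightarrow>
     (\<forall>X\<in>Ob C. TO X \<in> Ob C \<and> TA (idt C X) = idt C (TO X)) \<and>
     (\<forall>f\<in>Ar C. TA f \<in> hom C (TO (dom C f)) (TO (cod C f))) \<and>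
     (\<forall>f\<in>Ar C. \<forall>g\<in>Ar C. cod C f = dom C g \<longrightarrow> TA (cmp C g f) = cmp C (TA g) (TA f))"

definition is_mono_pmc ::
  "('o, 'a) category_data \<Rightarrow> ('o \<Rightarrow> 'o) \<Rightarrow> ('a \<Rightarrow> 'a) \<Rightarrow> ('o \<Rightarrow> 'a) \<Rightarrow> bool" where
  "is_mono_pmc C TO TA \<eta> \<longleftrightarrow>
     is_endofunctor C TO TA \<and>
     (\<forall>X\<in>Ob C. \<eta> X \<in> hom C X (TO X) \<and> is_mono C (\<eta> X)) \<and>
     (\<forall>f\<in>Ar C. cmp C (TA f) (\<eta> (dom C f)) = cmp C (\<eta> (cod C f)) f) \<and>
     (\<forall>m\<in>Ar C. \<forall>f\<in>Ar C. is_mono C m \<longrightarrow> dom C m = dom C f \<longrightarrow>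
        (\<exists>!\<phi>. \<phi> \<in> hom C (cod C m) (TO (cod C f)) \<and> is_pullback C \<phi> (\<eta> (cod C f)) m f))"

definition has_mono_pmc :: "('o, 'a) category_data \<Rightarrow> bool" where
  "has_mono_pmc C \<longleftrightarrow> (\<exists>TO TA \<eta>. is_mono_pmc C TO TA \<eta>)"

end

theory Submission
  imports Defs
begin

lemma cat_cmp:
  assumes "is_category C" "f \<in> Ar C" "g \<in> Ar C" "cod C f = dom C g"
  shows "cmp C g f \<in> Ar C" "dom C (cmp C g f) = dom C f" "cod C (cmp C g f) = cod C g"
  using assms unfolding is_category_def hom_def by blast+

lemma cat_assoc:
  assumes "is_category C" "f \<in> Ar C" "g \<in> Ar C" "h \<in> Ar C"
    "cod C f = dom C g" "cod C g = dom C h"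
  shows "cmp C h (cmp C g f) = cmp C (cmp C h g) f"
  using assms unfolding is_category_def by blast

lemma cat_dom_ob:
  assumes "is_category C" "f \<in> Ar C"
  shows "dom C f \<in> Ob C"
  using assms unfolding is_category_def by blast

lemma pullback_sym:
  assumes "is_pullback C f g p q"
  shows "is_pullback C g f q p"
proof -
  have e: "\<And>P Q. (\<exists>!u. P u \<and> Q u) = (\<exists>!u. Q u \<and> P u)" by (metis (no_types, lifting))
  show ?thesis using assms unfolding is_pullback_def
    apply (elim conjE)
    apply (intro conjI)
    apply simp_all
    by (smt (verit, best))
qed

theorem mainTheorem11:
  fixes \<C> :: "('o, 'a) category_data"
  assumes "is_category \<C>"
    and "has_pullbacks_along_monos \<C>"
    and "has_mono_pmc \<C>"
    and "f \<in> hom \<C> A B" and "m \<in> hom \<C> B C"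
    and "is_mono \<C> f" and "is_mono \<C> m"
    and "is_fpc \<C> f m n g"
  shows "is_mono \<C> n \<and> is_mono \<C> g"
proof -
  note cat = assms(1)
  have fA: "f \<in> Ar \<C>" "dom \<C> f = A" "cod \<C> f = B" using assms(4) unfolding hom_def by auto
  have mA: "m \<in> Ar \<C>" "dom \<C> m = B" "cod \<C> m = C" using assms(5) unfolding hom_def by auto
  have fmono: "\<And>x y. x \<in> Ar \<C> \<Longrightarrow> y \<in> Ar \<C> \<Longrightarrow> dom \<C> x = dom \<C> y \<Longrightarrow> cod \<C> x = dom \<C> f
      \<Longrightarrow> cod \<C> y = dom \<C> f \<Longrightarrow> cmp \<C> f x = cmp \<C> f y \<Longrightarrow> x = y"
    using assms(6) unfolding is_mono_def by blast
  have mmono: "\<And>x y. x \<in> Ar \<C> \<Longrightarrow> y \<in> Ar \<C> \<Longrightarrow> dom \<C> x = dom \<C> y \<Longrightarrow> cod \<C> x = dom \<C> m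
      \<Longrightarrow> cod \<C> y = dom \<C> m \<Longrightarrow> cmp \<C> m x = cmp \<C> m y \<Longrightarrow> x = y"
    using assms(7) unfolding is_mono_def by blast
  have fpc: "n \<in> Ar \<C>" "g \<in> Ar \<C>" "dom \<C> n = dom \<C> f" "cod \<C> n = dom \<C> g" "cod \<C> g = cod \<C> m"
    "is_pullback \<C> m g f n"
    using assms(8) unfolding is_fpc_def by auto
  have fpcU: "\<And>u v w t. u\<in>Ar \<C> \<Longrightarrow> v\<in>Ar \<C> \<Longrightarrow> w\<in>Ar \<C> \<Longrightarrow> t\<in>Ar \<C> \<Longrightarrow>
        is_pullback \<C> m w u v \<Longrightarrow> dom \<C> t = dom \<C> u \<Longrightarrow> cod \<C> t = dom \<C> f \<Longrightarrow> cmp \<C> f t = u \<Longrightarrow>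
        (\<exists>!y. y \<in> hom \<C> (dom \<C> w) (cod \<C> n) \<and> cmp \<C> g y = w \<and> cmp \<C> y v = cmp \<C> n t)"
    using assms(8) unfolding is_fpc_def by blast
  have sq: "cmp \<C> m f = cmp \<C> g n" and fcod: "cod \<C> f = dom \<C> m"
    using fpc(6) unfolding is_pullback_def by auto
  have pbU: "\<And>Z h k. Z \<in> Ob \<C> \<Longrightarrow> h \<in> hom \<C> Z (dom \<C> m) \<Longrightarrow> k \<in> hom \<C> Z (dom \<C> g) \<Longrightarrow>
        cmp \<C> m h = cmp \<C> g k \<Longrightarrow>
        (\<exists>!u. u \<in> hom \<C> Z (dom \<C> f) \<and> cmp \<C> f u = h \<and> cmp \<C> n u = k)"
    using fpc(6) unfolding is_pullback_def by blast
  have nmono: "is_mono \<C> n"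
    unfolding is_mono_def
  proof (intro conjI ballI impI)
    show "n \<in> Ar \<C>" by (rule fpc(1))
    fix x y assume x: "x \<in> Ar \<C>" and y: "y \<in> Ar \<C>" and d: "dom \<C> x = dom \<C> y"
      and cx: "cod \<C> x = dom \<C> n" and cy: "cod \<C> y = dom \<C> n" and e: "cmp \<C> n x = cmp \<C> n y"
    have "cmp \<C> m (cmp \<C> f x) = cmp \<C> (cmp \<C> m f) x"
      using cat_assoc[OF cat x fA(1) mA(1)] cx fpc(3) fcod by simp
    also have "\<dots> = cmp \<C> (cmp \<C> g n) x" using sq by simp
    also have "\<dots> = cmp \<C> g (cmp \<C> n x)"
      using cat_assoc[OF cat x fpc(1) fpc(2)] cx fpc(4) by simp
    also have "\<dots> = cmp \<C> g (cmp \<C> n y)" using e by simp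
    also have "\<dots> = cmp \<C> (cmp \<C> g n) y"
      using cat_assoc[OF cat y fpc(1) fpc(2)] cy fpc(4) by simp
    also have "\<dots> = cmp \<C> (cmp \<C> m f) y" using sq by simp
    also have "\<dots> = cmp \<C> m (cmp \<C> f y)"
      using cat_assoc[OF cat y fA(1) mA(1)] cy fpc(3) fcod by simp
    finally have "cmp \<C> m (cmp \<C> f x) = cmp \<C> m (cmp \<C> f y)" .
    then have "cmp \<C> f x = cmp \<C> f y"
      using mmono cat_cmp[OF cat x fA(1)] cat_cmp[OF cat y fA(1)] cx cy fpc(3) fcod d by simp
    then show "x = y" using fmono x y d cx cy fpc(3) by simp
  qed
  have gmono: "is_mono \<C> g"
    unfolding is_mono_def
  proof (intro conjI ballI impI)
    show "g \<in> Ar \<C>" by (rule fpc(2))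
    fix x y assume x: "x \<in> Ar \<C>" and y: "y \<in> Ar \<C>" and d: "dom \<C> x = dom \<C> y"
      and cx: "cod \<C> x = dom \<C> g" and cy: "cod \<C> y = dom \<C> g" and e: "cmp \<C> g x = cmp \<C> g y"
    define w where "w = cmp \<C> g x"
    have w: "w \<in> Ar \<C>" "dom \<C> w = dom \<C> x" "cod \<C> w = cod \<C> m"
      using cat_cmp[OF cat x fpc(2) cx] fpc(5) unfolding w_def by auto
    obtain p q where pq: "is_pullback \<C> w m p q"
      using assms(2) w(1) mA(1) assms(7) w(3) unfolding has_pullbacks_along_monos_def by blast
    have pb: "is_pullback \<C> m w q p" using pullback_sym[OF pq] .
    have pqf: "p \<in> Ar \<C>" "q \<in> Ar \<C>" "cod \<C> p = dom \<C> w" "cod \<C> q = dom \<C> m"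
      "dom \<C> p = dom \<C> q" "cmp \<C> w p = cmp \<C> m q"
      using pq unfolding is_pullback_def by auto
    have Zob: "dom \<C> p \<in> Ob \<C>" using cat_dom_ob[OF cat pqf(1)] .
    have xp: "cmp \<C> x p \<in> Ar \<C>" "dom \<C> (cmp \<C> x p) = dom \<C> p" "cod \<C> (cmp \<C> x p) = dom \<C> g"
      using cat_cmp[OF cat pqf(1) x] pqf(3) w(2) cx by auto
    have yp: "cmp \<C> y p \<in> Ar \<C>" "dom \<C> (cmp \<C> y p) = dom \<C> p" "cod \<C> (cmp \<C> y p) = dom \<C> g"
      using cat_cmp[OF cat pqf(1) y] pqf(3) w(2) cy d by auto
    have ex: "cmp \<C> m q = cmp \<C> g (cmp \<C> x p)"
      using pqf(6) cat_assoc[OF cat pqf(1) x fpc(2)] pqf(3) w(2) cx unfolding w_def by simp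
    have ey: "cmp \<C> m q = cmp \<C> g (cmp \<C> y p)"
      using pqf(6) cat_assoc[OF cat pqf(1) y fpc(2)] pqf(3) w(2) cy d e unfolding w_def by simp
    have qh: "q \<in> hom \<C> (dom \<C> p) (dom \<C> m)" using pqf unfolding hom_def by auto
    obtain t where t: "t \<in> hom \<C> (dom \<C> p) (dom \<C> f)" "cmp \<C> f t = q" "cmp \<C> n t = cmp \<C> x p"
      using pbU[OF Zob qh _ ex] xp unfolding hom_def by blast
    obtain t' where t': "t' \<in> hom \<C> (dom \<C> p) (dom \<C> f)" "cmp \<C> f t' = q" "cmp \<C> n t' = cmp \<C> y p"
      using pbU[OF Zob qh _ ey] yp unfolding hom_def by blast
    have "t = t'" using fmono t(1,2) t'(1,2) unfolding hom_def by auto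
    then have ypt: "cmp \<C> y p = cmp \<C> n t" using t'(3) by simp
    have tA: "t \<in> Ar \<C>" "dom \<C> t = dom \<C> q" "cod \<C> t = dom \<C> f" using t(1) pqf(5) unfolding hom_def by auto
    have U: "\<exists>!z. z \<in> hom \<C> (dom \<C> w) (cod \<C> n) \<and> cmp \<C> g z = w \<and> cmp \<C> z p = cmp \<C> n t"
      using fpcU[OF pqf(2) pqf(1) w(1) tA(1) pb tA(2) tA(3) t(2)] .
    have "x \<in> hom \<C> (dom \<C> w) (cod \<C> n) \<and> cmp \<C> g x = w \<and> cmp \<C> x p = cmp \<C> n t"
      using x w(2) cx fpc(4) t(3) unfolding hom_def w_def by auto
    moreover have "y \<in> hom \<C> (dom \<C> w) (cod \<C> n) \<and> cmp \<C> g y = w \<and> cmp \<C> y p = cmp \<C> n t"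
      using y w(2) d cy fpc(4) ypt e unfolding hom_def w_def by auto
    ultimately show "x = y" using U by blast
  qed
  show ?thesis using nmono gmono by simp
qed

end
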